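(* Let $G=HK$ for two normal subgroups $H$ and $K$ of the finite group $G$, let $p$ be a prime and $r\ge1$ an integer such that $H$ has exponent $p^r-1$. If $M(G,H,K)$ is trivial, then for every $i=1,\dots,k_K(H)$ one has $\alpha(p^r,i)=|L(p^r,i;h,K)|=1$.
   Context: All groups are finite; ${}^g x=gxg^{-1}$, $[x,y]=xyx^{-1}y^{-1}$. For normal subgroups $H,K$ of $G$, $H\wedge K$ is the group generated by symbols $h\wedge k$ ($h\in H,k\in K$) subject to $hh'\wedge k=({}^h h'\wedge {}^h k)(h\wedge k)$, $h\wedge kk'=(h\wedge k)({}^k h\wedge {}^k k')$, and $y\wedge y=1$ for $y\in H\cap K$; $\kappa':H\wedge K\to[H,K]$, $h\wedge k\mapsto[h,k]$, is an epimorphism and $M(G,H,K):=\ker\kappa'$. For $x\in H$, $C^\wedge_K(x)=\{k\in K:x\wedge k=1\}\le C_K(x)$. Let $h_1,\dots,h_{k_K(H)}$ be representatives of the $K$-conjugacy classes in $H$ ($k_K(H)$ = number of such classes). Define $\alpha(m,i)=|C_K(h_i^m)|/|C_K(h_i)|$ and $|L(m,i;h,K)|=|C_K(h_i^m):C^\wedge_K(h_i^m)|$, the order of $L(m,i;h,K)=C_K(h_i^m)/C^\wedge_K(h_i^m)$. *)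

theory Defs
  imports "HOL-Algebra.Algebra"
begin

definition conjg :: "('a, 'b) monoid_scheme \<Rightarrow> 'a \<Rightarrow> 'a \<Rightarrow> 'a" where
  "conjg G g x = g \<otimes>\<^bsub>G\<^esub> x \<otimes>\<^bsub>G\<^esub> inv\<^bsub>G\<^esub> g"

definition commg :: "('a, 'b) monoid_scheme \<Rightarrow> 'a \<Rightarrow> 'a \<Rightarrow> 'a" where
  "commg G x y = x \<otimes>\<^bsub>G\<^esub> y \<otimes>\<^bsub>G\<^esub> inv\<^bsub>G\<^esub> x \<otimes>\<^bsub>G\<^esub> inv\<^bsub>G\<^esub> y"

text \<open>Words in the free group on the symbols h \<and> k: a letter (b,(h,k)) stands for
  (h \<and> k) if b = False and for its inverse if b = True.\<close>
type_synonym 'a wword = "(bool \<times> 'a \<times> 'a) list"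

definition wgens :: "'a set \<Rightarrow> 'a set \<Rightarrow> (bool \<times> 'a \<times> 'a) set" where
  "wgens H K = UNIV \<times> (H \<times> K)"

text \<open>The congruence on words whose quotient is the non-abelian exterior product H \<and> K:
  the smallest congruence (w.r.t. concatenation) containing free cancellation and the
  defining relations.\<close>
inductive wedge_eqv :: "('a, 'b) monoid_scheme \<Rightarrow> 'a set \<Rightarrow> 'a set \<Rightarrow> 'a wword \<Rightarrow> 'a wword \<Rightarrow> bool"
  for G H K where
  refl: "wedge_eqv G H K w w"
| sym: "wedge_eqv G H K u w \<Longrightarrow> wedge_eqv G H K w u"
| trans: "wedge_eqv G H K u v \<Longrightarrow> wedge_eqv G H K v w \<Longrightarrow> wedge_eqv G H K u w"
| ctx: "wedge_eqv G H K a b \<Longrightarrow> set u \<subseteq> wgens H K \<Longrightarrow> set v \<subseteq> wgens H K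
        \<Longrightarrow> wedge_eqv G H K (u @ a @ v) (u @ b @ v)"
| cancel: "h \<in> H \<Longrightarrow> k \<in> K \<Longrightarrow> wedge_eqv G H K [(e, (h, k)), (\<not> e, (h, k))] []"
| rel1: "h \<in> H \<Longrightarrow> h' \<in> H \<Longrightarrow> k \<in> K \<Longrightarrow>
     wedge_eqv G H K [(False, (h \<otimes>\<^bsub>G\<^esub> h', k))]
       [(False, (conjg G h h', conjg G h k)), (False, (h, k))]"
| rel2: "h \<in> H \<Longrightarrow> k \<in> K \<Longrightarrow> k' \<in> K \<Longrightarrow>
     wedge_eqv G H K [(False, (h, k \<otimes>\<^bsub>G\<^esub> k'))]
       [(False, (h, k)), (False, (conjg G k h, conjg G k k'))]"
| rel3: "y \<in> H \<inter> K \<Longrightarrow> wedge_eqv G H K [(False, (y, y))] []"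

text \<open>The map \<kappa>' : H \<and> K \<rightarrow> [H,K] on words, h \<and> k \<mapsto> [h,k].\<close>
fun kappa_word :: "('a, 'b) monoid_scheme \<Rightarrow> 'a wword \<Rightarrow> 'a" where
  "kappa_word G [] = \<one>\<^bsub>G\<^esub>"
| "kappa_word G ((b, (h, k)) # w) =
     (if b then inv\<^bsub>G\<^esub> (commg G h k) else commg G h k) \<otimes>\<^bsub>G\<^esub> kappa_word G w"

text \<open>M(G,H,K) = ker \<kappa>' is trivial.\<close>
definition M_trivial :: "('a, 'b) monoid_scheme \<Rightarrow> 'a set \<Rightarrow> 'a set \<Rightarrow> bool" where
  "M_trivial G H K \<longleftrightarrow> (\<forall>w. set w \<subseteq> wgens H K \<longrightarrow> kappa_word G w = \<one>\<^bsub>G\<^esub> \<longrightarrow> wedge_eqv G H K w [])"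

definition centralizer_in :: "('a, 'b) monoid_scheme \<Rightarrow> 'a set \<Rightarrow> 'a \<Rightarrow> 'a set" where
  "centralizer_in G K x = {k \<in> K. k \<otimes>\<^bsub>G\<^esub> x = x \<otimes>\<^bsub>G\<^esub> k}"

definition wedge_centralizer :: "('a, 'b) monoid_scheme \<Rightarrow> 'a set \<Rightarrow> 'a set \<Rightarrow> 'a \<Rightarrow> 'a set" where
  "wedge_centralizer G H K x = {k \<in> K. wedge_eqv G H K [(False, (x, k))] []}"

definition kclass :: "('a, 'b) monoid_scheme \<Rightarrow> 'a set \<Rightarrow> 'a \<Rightarrow> 'a set" where
  "kclass G K h = {conjg G k h | k. k \<in> K}"

definition num_kclasses :: "('a, 'b) monoid_scheme \<Rightarrow> 'a set \<Rightarrow> 'a set \<Rightarrow> nat" where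
  "num_kclasses G K H = card (kclass G K ` H)"

definition group_exponent :: "('a, 'b) monoid_scheme \<Rightarrow> 'a set \<Rightarrow> nat" where
  "group_exponent G H = (LEAST e::nat. 0 < e \<and> (\<forall>x\<in>H. x [^]\<^bsub>G\<^esub> e = \<one>\<^bsub>G\<^esub>))"

definition alpha :: "('a, 'b) monoid_scheme \<Rightarrow> 'a set \<Rightarrow> (nat \<Rightarrow> 'a) \<Rightarrow> nat \<Rightarrow> nat \<Rightarrow> real" where
  "alpha G K hs m i = real (card (centralizer_in G K (hs i [^]\<^bsub>G\<^esub> m)))
                     / real (card (centralizer_in G K (hs i)))"

definition L_order :: "('a, 'b) monoid_scheme \<Rightarrow> 'a set \<Rightarrow> 'a set \<Rightarrow> (nat \<Rightarrow> 'a) \<Rightarrow> nat \<Rightarrow> nat \<Rightarrow> real" where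
  "L_order G H K hs m i = real (card (centralizer_in G K (hs i [^]\<^bsub>G\<^esub> m)))
                     / real (card (wedge_centralizer G H K (hs i [^]\<^bsub>G\<^esub> m)))"

end

theory Submission
  imports Defs
begin

definition good :: "'a set \<Rightarrow> 'a set \<Rightarrow> 'a wword \<Rightarrow> bool" where
  "good H K w \<longleftrightarrow> set w \<subseteq> wgens H K"

lemma kappa_closed:
  fixes G (structure)
  assumes "group G" "H \<subseteq> carrier G" "K \<subseteq> carrier G" "set w \<subseteq> wgens H K"
  shows "kappa_word G w \<in> carrier G"
  using assms(4)
proof (induction w)
  interpret group G by fact
  {
  case Nil then show ?case by simp
next
  case (Cons a w)
  obtain b h k where a: "a = (b,(h,k))" by (cases a) auto
  have hk: "h \<in> carrier G" "k \<in> carrier G" using Cons.prems assms(2,3) a by (auto simp: wgens_def)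
  have c: "commg G h k \<in> carrier G" using hk by (simp add: commg_def)
  have w: "kappa_word G w \<in> carrier G" using Cons by simp
  show ?case using w c a by simp
  }
qed

lemma kappa_append:
  fixes G (structure)
  assumes "group G" "H \<subseteq> carrier G" "K \<subseteq> carrier G" "set u \<subseteq> wgens H K" "set v \<subseteq> wgens H K"
  shows "kappa_word G (u @ v) = kappa_word G u \<otimes> kappa_word G v"
  using assms(4)
proof (induction u)
  interpret group G by fact
  have v: "kappa_word G v \<in> carrier G" using kappa_closed[OF assms(1,2,3,5)] .
  {
  case Nil then show ?case using v by simp
next
  case (Cons a w)
  obtain b h k where a: "a = (b,(h,k))" by (cases a) auto
  have hk: "h \<in> carrier G" "k \<in> carrier G" using Cons.prems assms(2,3) a by (auto simp: wgens_def)
  have c: "commg G h k \<in> carrier G" using hk by (simp add: commg_def)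
  have w: "set w \<subseteq> wgens H K" using Cons.prems by auto
  have kw: "kappa_word G w \<in> carrier G" using kappa_closed[OF assms(1,2,3) w] .
  have IH: "kappa_word G (w @ v) = kappa_word G w \<otimes> kappa_word G v" using Cons.IH w by simp
  show ?case using IH c a kw v by (simp add: m_assoc)
  }
qed

lemma (in group) cancel1: "x \<in> carrier G \<Longrightarrow> y \<in> carrier G \<Longrightarrow> x \<otimes> (inv x \<otimes> y) = y"
  by (simp add: m_assoc[symmetric])
lemma (in group) cancel2: "x \<in> carrier G \<Longrightarrow> y \<in> carrier G \<Longrightarrow> inv x \<otimes> (x \<otimes> y) = y"
  by (simp add: m_assoc[symmetric])

lemma rel1_id:
  assumes "group G" "h \<in> carrier G" "h' \<in> carrier G" "k \<in> carrier G"
  shows "commg G (h \<otimes>\<^bsub>G\<^esub> h') k = commg G (conjg G h h') (conjg G h k) \<otimes>\<^bsub>G\<^esub> commg G h k"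
proof -
  interpret group G by fact
  show ?thesis using assms(2-4)
    by (simp add: commg_def conjg_def m_assoc inv_mult_group cancel1 cancel2)
qed

lemma rel2_id:
  assumes "group G" "h \<in> carrier G" "k' \<in> carrier G" "k \<in> carrier G"
  shows "commg G h (k \<otimes>\<^bsub>G\<^esub> k') = commg G h k \<otimes>\<^bsub>G\<^esub> commg G (conjg G k h) (conjg G k k')"
proof -
  interpret group G by fact
  show ?thesis using assms(2-4)
    by (simp add: commg_def conjg_def m_assoc inv_mult_group cancel1 cancel2)
qed

lemma commg_one_iff:
  fixes G (structure)
  assumes "group G" "x \<in> carrier G" "k \<in> carrier G"
  shows "commg G x k = \<one>\<^bsub>G\<^esub> \<longleftrightarrow> k \<otimes>\<^bsub>G\<^esub> x = x \<otimes>\<^bsub>G\<^esub> k"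
proof -
  interpret group G by fact
  have eq: "commg G x k = (x \<otimes> k) \<otimes> inv (k \<otimes> x)"
    using assms(2,3) by (simp add: commg_def inv_mult_group m_assoc)
  have "(x \<otimes> k) \<otimes> inv (k \<otimes> x) = \<one> \<longleftrightarrow> x \<otimes> k = k \<otimes> x"
  proof
    assume a: "(x \<otimes> k) \<otimes> inv (k \<otimes> x) = \<one>"
    have "(x \<otimes> k) \<otimes> inv (k \<otimes> x) \<otimes> (k \<otimes> x) = k \<otimes> x" using a assms by simp
    then show "x \<otimes> k = k \<otimes> x" using assms by (simp add: m_assoc)
  next
    assume "x \<otimes> k = k \<otimes> x"
    then show "(x \<otimes> k) \<otimes> inv (k \<otimes> x) = \<one>" using assms by simp
  qed
  then show ?thesis using eq by auto
qed

lemma wedge_kappa: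
  fixes G (structure)
  assumes G: "group G" and HN: "H \<lhd> G" and KN: "K \<lhd> G"
  shows "wedge_eqv G H K u w \<Longrightarrow> (good H K u \<longleftrightarrow> good H K w) \<and> (good H K u \<longrightarrow> kappa_word G u = kappa_word G w)"
proof (induction rule: wedge_eqv.induct)
  interpret group G by fact
  have Hs: "H \<subseteq> carrier G" using HN normal_imp_subgroup subgroup.subset by blast
  have Ks: "K \<subseteq> carrier G" using KN normal_imp_subgroup subgroup.subset by blast
  have sH: "subgroup H G" using HN normal_imp_subgroup by blast
  have sK: "subgroup K G" using KN normal_imp_subgroup by blast
  {
    case (refl w) then show ?case by simp
  next
    case (sym u w) then show ?case by simp
  next
    case (trans u v w) then show ?case by simp
  next
    case (ctx a b u v)
    have ga: "good H K (u @ a @ v) \<longleftrightarrow> good H K a" "good H K (u @ b @ v) \<longleftrightarrow> good H K b"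
      using ctx.hyps(2,3) by (auto simp: good_def)
    show ?case
    proof (intro conjI impI)
      show "good H K (u @ a @ v) = good H K (u @ b @ v)" using ga ctx.IH by simp
      assume "good H K (u @ a @ v)"
      then have gab: "set a \<subseteq> wgens H K" "set b \<subseteq> wgens H K" using ga ctx.IH by (auto simp: good_def)
      have "kappa_word G (u @ a @ v) = kappa_word G u \<otimes> (kappa_word G a \<otimes> kappa_word G v)"
        using kappa_append[OF G Hs Ks] ctx.hyps(2,3) gab by simp
      also have "\<dots> = kappa_word G u \<otimes> (kappa_word G b \<otimes> kappa_word G v)"
        using ctx.IH gab by (simp add: good_def)
      also have "\<dots> = kappa_word G (u @ b @ v)"
        using kappa_append[OF G Hs Ks] ctx.hyps(2,3) gab by simp
      finally show "kappa_word G (u @ a @ v) = kappa_word G (u @ b @ v)" .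
    qed
  next
    case (cancel h k e)
    have "h \<in> carrier G" "k \<in> carrier G" using cancel Hs Ks by auto
    then have c: "commg G h k \<in> carrier G" by (simp add: commg_def)
    show ?case using cancel c by (auto simp: good_def wgens_def)
  next
    case (rel1 h h' k)
    have hc: "h \<in> carrier G" "h' \<in> carrier G" "k \<in> carrier G" using rel1 Hs Ks by auto
    have m1: "h \<otimes> h' \<in> H" using subgroup.m_closed[OF sH rel1(1) rel1(2)] .
    have m2: "conjg G h h' \<in> H" unfolding conjg_def
      using subgroup.m_closed[OF sH m1 subgroup.m_inv_closed[OF sH rel1(1)]] .
    have m3: "conjg G h k \<in> K" unfolding conjg_def using normal.inv_op_closed2[OF KN hc(1) rel1(3)] .
    have c: "commg G (conjg G h h') (conjg G h k) \<in> carrier G" "commg G h k \<in> carrier G"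
      using hc subsetD[OF Hs m2] subsetD[OF Ks m3] by (simp_all add: commg_def)
    show ?case using m1 m2 m3 rel1 c rel1_id[OF G hc] by (simp add: good_def wgens_def)
  next
    case (rel2 h k k')
    have hc: "h \<in> carrier G" "k' \<in> carrier G" "k \<in> carrier G" using rel2 Hs Ks by auto
    have m1: "k \<otimes> k' \<in> K" using subgroup.m_closed[OF sK rel2(2) rel2(3)] .
    have m2: "conjg G k k' \<in> K" unfolding conjg_def
      using subgroup.m_closed[OF sK m1 subgroup.m_inv_closed[OF sK rel2(2)]] .
    have m3: "conjg G k h \<in> H" unfolding conjg_def using normal.inv_op_closed2[OF HN hc(3) rel2(1)] .
    have c: "commg G (conjg G k h) (conjg G k k') \<in> carrier G" "commg G h k \<in> carrier G"
      using hc subsetD[OF Ks m2] subsetD[OF Hs m3] by (simp_all add: commg_def)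
    show ?case using m1 m2 m3 rel2 c rel2_id[OF G hc] by (simp add: good_def wgens_def)
  next
    case (rel3 y)
    have "y \<in> carrier G" using rel3 Hs by auto
    then have "commg G y y = \<one>" by (simp add: commg_def m_assoc cancel1)
    then show ?case using rel3 by (auto simp: good_def wgens_def)
  }
qed

theorem mainTheorem3:
  fixes G (structure) and H K :: "'a set" and p r :: nat and hs :: "nat \<Rightarrow> 'a"
  assumes "group G" and "finite (carrier G)"
    and "H \<lhd> G" and "K \<lhd> G" and "H <#> K = carrier G"
    and "Factorial_Ring.prime p" and "1 \<le> r"
    and "group_exponent G H = p ^ r - 1"
    and "\<forall>i\<in>{1..num_kclasses G K H}. hs i \<in> H"
    and "bij_betw (\<lambda>i. kclass G K (hs i)) {1..num_kclasses G K H} (kclass G K ` H)"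
    and "M_trivial G H K"
  shows "\<forall>i\<in>{1..num_kclasses G K H}.
           alpha G K hs (p ^ r) i = 1 \<and> L_order G H K hs (p ^ r) i = 1"
proof -
  interpret group G by fact
  have Hs: "H \<subseteq> carrier G" using assms(3) normal_imp_subgroup subgroup.subset by blast
  have Ks: "K \<subseteq> carrier G" using assms(4) normal_imp_subgroup subgroup.subset by blast
  have oneK: "\<one> \<in> K" using assms(4) normal_imp_subgroup subgroup.one_closed by blast
  have ex: "\<exists>e::nat. 0 < e \<and> (\<forall>x\<in>H. x [^] e = \<one>)"
    using assms(2) Hs pow_order_eq_1 order_gt_0_iff_finite by blast
  have E: "0 < p ^ r - 1 \<and> (\<forall>x\<in>H. x [^] (p ^ r - 1) = \<one>)"
    using LeastI_ex[OF ex] assms(8) unfolding group_exponent_def by simp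
  have p1: "1 < p" using assms(6) prime_gt_1_nat by blast
  have "p ^ r = Suc (p ^ r - 1)" using E by linarith
  then have pw: "x [^] (p ^ r) = x" if "x \<in> H" for x
    using E that Hs by (metis nat_pow_Suc l_one subsetD)
  show ?thesis
  proof
    fix i assume i: "i \<in> {1..num_kclasses G K H}"
    define x where "x = hs i"
    have xH: "x \<in> H" using assms(9) i x_def by blast
    have xc: "x \<in> carrier G" using xH Hs by blast
    have px: "hs i [^] (p ^ r) = x" using pw xH x_def by simp
    define C where "C = centralizer_in G K x"
    have fC: "finite C" using C_def Ks assms(2) unfolding centralizer_in_def
      by (metis (no_types, lifting) finite_subset mem_Collect_eq subsetI subsetD)
    have "\<one> \<in> C" using oneK xc C_def by (simp add: centralizer_in_def)
    then have cC: "card C > 0" using fC card_gt_0_iff by blast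
    have W: "wedge_centralizer G H K x = C"
    proof
      show "wedge_centralizer G H K x \<subseteq> C"
      proof
        fix k assume "k \<in> wedge_centralizer G H K x"
        then have k: "k \<in> K" "wedge_eqv G H K [(False, (x, k))] []"
          by (auto simp: wedge_centralizer_def)
        have g: "good H K [(False, (x, k))]" using k xH by (simp add: good_def wgens_def)
        have kc: "k \<in> carrier G" using k Ks by blast
        have "kappa_word G [(False, (x, k))] = \<one>"
          using wedge_kappa[OF assms(1,3,4) k(2)] g by simp
        then have "commg G x k = \<one>" using xc kc by (simp add: commg_def)
        then have "k \<otimes> x = x \<otimes> k" using commg_one_iff[OF assms(1) xc kc] by simp
        then show "k \<in> C" using k C_def by (simp add: centralizer_in_def)
      qed
    next
      show "C \<subseteq> wedge_centralizer G H K x"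
      proof
        fix k assume "k \<in> C"
        then have k: "k \<in> K" "k \<otimes> x = x \<otimes> k" by (auto simp: C_def centralizer_in_def)
        have kc: "k \<in> carrier G" using k Ks by blast
        have "commg G x k = \<one>" using commg_one_iff[OF assms(1) xc kc] k by simp
        then have "kappa_word G [(False, (x, k))] = \<one>" using xc kc by (simp add: commg_def)
        moreover have "set [(False, (x, k))] \<subseteq> wgens H K" using k xH by (simp add: wgens_def)
        ultimately have "wedge_eqv G H K [(False, (x, k))] []"
          using assms(11) unfolding M_trivial_def by blast
        then show "k \<in> wedge_centralizer G H K x" using k by (simp add: wedge_centralizer_def)
      qed
    qed
    show "alpha G K hs (p ^ r) i = 1 \<and> L_order G H K hs (p ^ r) i = 1"
      unfolding alpha_def L_order_def px W using cC x_def C_def by simp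
  qed
qed

end
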